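(* Fix an integer $d\ge1$, let $A:=\cos(g^{\circ d}(\pi))\in(0,1]$, $\eta\in(0,1/2]$, $\sigma>0$, $\beta:=2\eta/\sigma^2$, and $0\le c\le A/40$. Let $F:\mathbb{R}^n\to\mathbb{R}^n$ be a measurable vector field with $\|F(x)-\nabla L(x)\|\le c(\|x\|+1)$ for every $x$ at which $L$ is differentiable. Let $x_0\ne0$ and $x_{t+1}=x_t-\eta F(x_t)+z_{t+1}$ with $z_1,z_2,\dots$ i.i.d. $N(0,\sigma^2I_n)$. Then for every integer $t\ge3/\eta$ and every $a>0$, $$\Pr\big[\|x_t\|<0.9A-a\big]\le e^{-\beta a^2/4}.$$
   Context: $e_1=(1,0,\dots,0)\in\mathbb{R}^n$; for $x\neq0$, $\theta(x)\in[0,\pi]$ is the angle between $x$ and $e_1$. $g(\theta)=\arccos\big(\frac{(\pi-\theta)\cos\theta+\sin\theta}{\pi}\big)$, $g^{\circ d}$ its $d$-fold composition. $L(x)=\frac12\|x\|^2-\|x\|\cos\big(g^{\circ d}(\theta(x))\big)+\frac12$. (In the paper $F=\nabla\tilde L$, the gradient of the actual network loss, which is close to $\nabla L$ under the WDC/RRIC assumptions.) *)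

theory Defs
  imports "HOL-Probability.Probability"
begin

text \<open>Angle between a nonzero vector x and the fixed unit vector e (playing the role of e_1).\<close>
definition theta :: "'a::euclidean_space \<Rightarrow> 'a \<Rightarrow> real" where
  "theta e x = arccos ((x \<bullet> e) / (norm x * norm e))"

definition gfun :: "real \<Rightarrow> real" where
  "gfun th = arccos (((pi - th) * cos th + sin th) / pi)"

definition Lfun :: "nat \<Rightarrow> 'a::euclidean_space \<Rightarrow> 'a \<Rightarrow> real" where
  "Lfun d e x = (1/2) * (norm x)\<^sup>2 - norm x * cos ((gfun ^^ d) (theta e x)) + 1/2"

definition gauss_dens :: "real \<Rightarrow> 'a::euclidean_space \<Rightarrow> real" where
  "gauss_dens s v = (2 * pi * s\<^sup>2) powr (- real DIM('a) / 2) * exp (- (norm v)\<^sup>2 / (2 * s\<^sup>2))"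

end

theory Submission
  imports Defs
begin

definition hfun :: "real \<Rightarrow> real" where
  "hfun th = ((pi - th) * cos th + sin th) / pi"

lemma gfun_hfun: "gfun th = arccos (hfun th)"
  by (simp add: gfun_def hfun_def)

lemma hfun_deriv: "(hfun has_real_derivative (- (pi - th) * sin th / pi)) (at th)"
  unfolding hfun_def
  by (auto intro!: derivative_eq_intros simp: field_simps)

lemma hfun_0: "hfun 0 = 1" by (simp add: hfun_def)
lemma hfun_pi: "hfun pi = 0" by (simp add: hfun_def)

lemma hfun_mono:
  assumes "0 \<le> x" "x \<le> y" "y \<le> pi"
  shows "hfun y \<le> hfun x"
proof -
  have "\<forall>t. x \<le> t \<and> t \<le> y \<longrightarrow> (\<exists>D. (hfun has_real_derivative D) (at t) \<and> D \<le> 0)"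
  proof (intro allI impI)
    fix t assume t: "x \<le> t \<and> t \<le> y"
    have "sin t \<ge> 0" using t assms by (intro sin_ge_zero) auto
    moreover have "pi - t \<ge> 0" using t assms by auto
    ultimately have "- (pi - t) * sin t / pi \<le> 0" by (intro divide_nonpos_pos mult_nonpos_nonneg) auto
    then show "\<exists>D. (hfun has_real_derivative D) (at t) \<and> D \<le> 0" using hfun_deriv by blast
  qed
  then show ?thesis using DERIV_nonpos_imp_nonincreasing[of x y hfun] assms by auto
qed

lemma hfun_lt1:
  assumes "0 < x" "x \<le> pi"
  shows "hfun x < 1"
proof -
  have "hfun (min x (pi/2)) < hfun 0"
  proof (rule DERIV_neg_imp_decreasing_open[of 0 "min x (pi/2)" hfun])
    show "0 < min x (pi/2)" using assms pi_gt_zero by auto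
    fix t assume t: "0 < t" "t < min x (pi/2)"
    have "sin t > 0" using t assms by (intro sin_gt_zero) auto
    moreover have "pi - t > 0" using t assms by auto
    ultimately have "- (pi - t) * sin t / pi < 0" by (intro divide_neg_pos mult_neg_pos) auto
    then show "\<exists>y. (hfun has_real_derivative y) (at t) \<and> y < 0" using hfun_deriv by blast
  next
    show "continuous_on {0..min x (pi / 2)} hfun" unfolding hfun_def
      by (intro continuous_intros) auto
  qed
  moreover have "hfun x \<le> hfun (min x (pi/2))" using assms by (intro hfun_mono) auto
  ultimately show ?thesis using hfun_0 by simp
qed

lemma hfun_range:
  assumes "0 \<le> x" "x \<le> pi"
  shows "0 \<le> hfun x \<and> hfun x \<le> 1"
proof -
  have "hfun pi \<le> hfun x" "hfun x \<le> hfun 0" using assms by (auto intro!: hfun_mono)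
  then show ?thesis using hfun_0 hfun_pi by auto
qed

lemma gfun_range:
  assumes "0 \<le> x" "x \<le> pi"
  shows "0 \<le> gfun x \<and> gfun x \<le> pi/2"
proof -
  have "arccos (hfun x) \<le> arccos 0" using hfun_range[OF assms] by (intro arccos_le_arccos) auto
  then show ?thesis using hfun_range[OF assms] by (auto simp: gfun_hfun intro!: arccos_lbound)
qed

lemma gfun_pos:
  assumes "0 < x" "x \<le> pi"
  shows "0 < gfun x"
proof -
  have "arccos 1 < arccos (hfun x)" using hfun_range[of x] hfun_lt1[OF assms] assms
    by (intro arccos_less_arccos) auto
  then show ?thesis by (simp add: gfun_hfun)
qed

lemma gfun_mono:
  assumes "0 \<le> x" "x \<le> y" "y \<le> pi"
  shows "gfun x \<le> gfun y"
  unfolding gfun_hfun using hfun_range[of y] hfun_range[of x] hfun_mono[OF assms] assms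
  by (intro arccos_le_arccos) auto

lemma gd_range:
  assumes "0 \<le> x" "x \<le> pi"
  shows "0 \<le> (gfun ^^ n) x \<and> (gfun ^^ n) x \<le> pi"
  using assms
proof (induction n)
  case (Suc n) then show ?case using gfun_range[of "(gfun ^^ n) x"] by auto
qed auto

lemma gd_mono:
  assumes "0 \<le> x" "x \<le> y" "y \<le> pi"
  shows "(gfun ^^ n) x \<le> (gfun ^^ n) y"
proof (induction n)
  case (Suc n) then show ?case using gd_range[of x n] gd_range[of y n] assms
    by (auto intro!: gfun_mono)
next
  case 0 then show ?case using assms by simp
qed

lemma cos_gd_ge:
  assumes "0 \<le> x" "x \<le> pi"
  shows "cos ((gfun ^^ n) pi) \<le> cos ((gfun ^^ n) x)"
  using gd_range[of x n] gd_range[of pi n] gd_mono[of x pi n] assms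
  by (intro cos_monotone_0_pi_le) auto

lemma gfun_differentiable:
  assumes "0 < x" "x < pi"
  shows "gfun differentiable (at x)"
proof -
  have "((\<lambda>t. arccos (hfun t)) has_real_derivative
      (inverse (- sqrt (1 - (hfun x)\<^sup>2)) * (- (pi - x) * sin x / pi))) (at x)"
    using hfun_range[of x] hfun_lt1[of x] assms
    by (intro DERIV_chain2[OF DERIV_arccos hfun_deriv]) auto
  then show ?thesis unfolding gfun_hfun[abs_def]
    using real_differentiable_def differentiableI by (metis has_field_derivative_imp_has_derivative)
qed

lemma gd_differentiable:
  assumes "0 < x" "x < pi"
  shows "(gfun ^^ n) differentiable (at x) \<and> 0 < (gfun ^^ n) x \<and> (gfun ^^ n) x < pi"
proof (induction n)
  case 0 then show ?case using assms by simp
next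
  case (Suc n)
  then have "(gfun \<circ> (gfun ^^ n)) differentiable (at x)"
    by (intro differentiable_chain_at gfun_differentiable) auto
  moreover have "0 < gfun ((gfun ^^ n) x)" using Suc by (intro gfun_pos) auto
  moreover have "gfun ((gfun ^^ n) x) < pi" using Suc gfun_range[of "(gfun ^^ n) x"] pi_gt_zero by auto
  ultimately show ?case by (simp add: comp_def)
qed

lemma theta_range: "0 \<le> theta e x \<and> theta e x \<le> pi"
proof -
  have "\<bar>x \<bullet> e\<bar> \<le> norm x * norm e" by (rule Cauchy_Schwarz_ineq2)
  then have "\<bar>(x \<bullet> e) / (norm x * norm e)\<bar> \<le> 1"
    by (cases "norm x * norm e = 0") (auto simp: abs_divide divide_le_eq_1)
  then have "-1 \<le> (x \<bullet> e) / (norm x * norm e) \<and> (x \<bullet> e) / (norm x * norm e) \<le> 1" by linarith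
  then show ?thesis unfolding theta_def by (auto intro!: arccos_lbound arccos_ubound)
qed

lemma theta_scale:
  assumes "r > 0"
  shows "theta e (r *\<^sub>R x) = theta e x"
  using assms by (simp add: theta_def)

lemma Lfun_ray:
  fixes y :: "'a::euclidean_space"
  assumes "r > 0"
  shows "Lfun d e (r *\<^sub>R y) = (1/2) * r\<^sup>2 * (norm y)\<^sup>2 - r * norm y * cos ((gfun ^^ d) (theta e y)) + 1/2"
  using assms by (simp add: Lfun_def theta_scale power_mult_distrib)

lemma radial_deriv:
  fixes y v :: "'a::euclidean_space"
  assumes y: "y \<noteq> 0" and D: "(Lfun d e has_derivative (\<lambda>h. v \<bullet> h)) (at y)"
  shows "v \<bullet> y = norm y * (norm y - cos ((gfun ^^ d) (theta e y)))"
proof -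
  define C where "C = cos ((gfun ^^ d) (theta e y))"
  define R where "R = norm y"
  have g: "((\<lambda>s::real. (1 + s) *\<^sub>R y) has_derivative (\<lambda>h. h *\<^sub>R y)) (at 0)"
    by (auto intro!: derivative_eq_intros)
  have D': "(Lfun d e has_derivative (\<lambda>h. v \<bullet> h)) (at ((1 + 0) *\<^sub>R y))" using D by simp
  have "((\<lambda>s. Lfun d e ((1 + s) *\<^sub>R y)) has_derivative (\<lambda>h. v \<bullet> (h *\<^sub>R y))) (at 0)"
    using has_derivative_compose[OF g D'] by (simp add: comp_def)
  then have d1: "((\<lambda>s. Lfun d e ((1 + s) *\<^sub>R y)) has_real_derivative (v \<bullet> y)) (at 0)"
    by (simp add: has_field_derivative_def mult.commute[of _ "v \<bullet> y"])
  have d2: "((\<lambda>s. (1/2) * (1+s)\<^sup>2 * R\<^sup>2 - (1+s) * R * C + 1/2) has_real_derivative (R\<^sup>2 - R * C)) (at 0)"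
    by (auto intro!: derivative_eq_intros simp: power2_eq_square)
  have d3: "((\<lambda>s. Lfun d e ((1 + s) *\<^sub>R y)) has_real_derivative (R\<^sup>2 - R * C)) (at 0)"
  proof (rule has_field_derivative_transform_within_open[OF d2, of "{-1<..<1}"])
    fix s :: real assume "s \<in> {-1<..<1}"
    then show "(1/2) * (1+s)\<^sup>2 * R\<^sup>2 - (1+s) * R * C + 1/2 = Lfun d e ((1 + s) *\<^sub>R y)"
      using Lfun_ray[where r="1+s" and y=y and d=d and e=e] by (simp add: R_def C_def)
  qed auto
  have "v \<bullet> y = R\<^sup>2 - R * C" using DERIV_unique[OF d1 d3] .
  then show ?thesis by (simp add: R_def C_def power2_eq_square algebra_simps)
qed

lemma linear_inner_rep:
  fixes D :: "'a::euclidean_space \<Rightarrow> real"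
  assumes "linear D"
  shows "D = (\<lambda>h. (\<Sum>b\<in>Basis. D b *\<^sub>R b) \<bullet> h)"
proof
  fix h :: 'a
  have "D h = D (\<Sum>b\<in>Basis. (h \<bullet> b) *\<^sub>R b)" by (simp add: euclidean_representation)
  also have "\<dots> = (\<Sum>b\<in>Basis. (h \<bullet> b) * D b)"
    using assms by (simp add: linear_sum linear_scale)
  also have "\<dots> = (\<Sum>b\<in>Basis. (D b *\<^sub>R b) \<bullet> h)"
    by (intro sum.cong) (auto simp: inner_commute)
  also have "\<dots> = (\<Sum>b\<in>Basis. D b *\<^sub>R b) \<bullet> h"
    by (simp add: inner_sum_left)
  finally show "D h = (\<Sum>b\<in>Basis. D b *\<^sub>R b) \<bullet> h" .
qed

lemma differentiable_grad:
  fixes f :: "'a::euclidean_space \<Rightarrow> real"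
  assumes "f differentiable (at y)"
  obtains v where "(f has_derivative (\<lambda>h. v \<bullet> h)) (at y)"
proof -
  obtain D where D: "(f has_derivative D) (at y)" using assms by (auto simp: differentiable_def)
  then have "linear D" by (rule has_derivative_linear)
  then show ?thesis using D linear_inner_rep[of D] that by metis
qed

lemma Lfun_diff_offaxis:
  fixes x e :: "'a::euclidean_space"
  assumes e: "e \<in> Basis" and x: "x \<noteq> 0" and ax: "\<bar>x \<bullet> e\<bar> < norm x"
  shows "Lfun d e differentiable (at x)"
proof -
  define u where "u = (\<lambda>y::'a. (y \<bullet> e) / (norm y * norm e))"
  have ne: "norm e = 1" using e by simp
  have ud: "u differentiable (at x)" unfolding u_def using x e
    by (intro differentiable_divide differentiable_inner differentiable_mult) (auto simp: differentiable_norm_at)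
  have ur: "-1 < u x" "u x < 1" using ax x ne by (auto simp: u_def abs_less_iff field_simps)
  have "(arccos has_real_derivative inverse (- sqrt (1 - (u x)\<^sup>2))) (at (u x))"
    using ur by (intro DERIV_arccos) auto
  then have ad: "arccos differentiable (at (u x))"
    by (metis differentiableI has_field_derivative_imp_has_derivative)
  have "arccos (u x) < arccos (-1)" using ur by (intro arccos_less_arccos) auto
  moreover have "arccos 1 < arccos (u x)" using ur by (intro arccos_less_arccos) auto
  ultimately have ar: "0 < arccos (u x)" "arccos (u x) < pi" by auto
  have gd: "(gfun ^^ d) differentiable (at (arccos (u x)))" using gd_differentiable[OF ar] by auto
  have c1: "(\<lambda>y. arccos (u y)) differentiable (at x)"
    by (rule differentiable_compose[OF ad ud])
  have c2: "(\<lambda>y. (gfun ^^ d) (arccos (u y))) differentiable (at x)"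
    by (rule differentiable_compose[OF gd c1])
  have c3: "(\<lambda>y. cos ((gfun ^^ d) (arccos (u y)))) differentiable (at x)"
    by (rule differentiable_compose[OF _ c2])
       (metis DERIV_cos differentiableI has_field_derivative_imp_has_derivative)
  have "(\<lambda>y. (1/2) * (norm y)\<^sup>2 - norm y * cos ((gfun ^^ d) (arccos (u y))) + 1/2) differentiable (at x)"
    using c3 x by (intro differentiable_add differentiable_diff differentiable_mult differentiable_power) (auto simp: differentiable_norm_at)
  moreover have "Lfun d e = (\<lambda>y. (1/2) * (norm y)\<^sup>2 - norm y * cos ((gfun ^^ d) (arccos (u y))) + 1/2)"
    by (auto simp: Lfun_def theta_def u_def fun_eq_iff)
  ultimately show ?thesis by simp
qed

lemma Lfun_diff_dim1:
  fixes x e :: "'a::euclidean_space"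
  assumes e: "e \<in> Basis" and x: "x \<noteq> 0" and dim: "DIM('a) = 1"
  shows "Lfun d e differentiable (at x)"
proof -
  obtain b where "Basis = {b::'a}" using dim card_1_singletonE by blast
  then have B: "Basis = {e}" using e by (metis singletonD)
  have rep: "y = (y \<bullet> e) *\<^sub>R e" for y :: 'a
    using euclidean_representation[of y] unfolding B by simp
  have ne: "norm e = 1" using e by simp
  have nrm: "\<And>y::'a. norm y = \<bar>y \<bullet> e\<bar>"
    by (metis ne norm_scaleR rep mult.right_neutral)
  have xe: "x \<bullet> e \<noteq> 0" using rep x by (metis scale_zero_left)
  define S where "S = {y::'a. 0 < (y \<bullet> e) * (x \<bullet> e)}"
  have "open S" unfolding S_def by (intro open_Collect_less continuous_intros)
  have xS: "x \<in> S" using xe by (auto simp: S_def zero_less_mult_iff linorder_neq_iff)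
  define C where "C = cos ((gfun ^^ d) (theta e x))"
  have eq: "Lfun d e y = (1/2) * (norm y)\<^sup>2 - norm y * C + 1/2" if "y \<in> S" for y
  proof -
    have "(y \<bullet> e) / (norm y * norm e) = sgn (y \<bullet> e)" using ne nrm[of y]
      by (simp add: sgn_if)
    moreover have "(x \<bullet> e) / (norm x * norm e) = sgn (x \<bullet> e)" using ne nrm[of x]
      by (simp add: sgn_if)
    moreover have "sgn (y \<bullet> e) = sgn (x \<bullet> e)" using that
      by (auto simp: S_def sgn_if zero_less_mult_iff)
    ultimately have "theta e y = theta e x" by (simp add: theta_def)
    then show ?thesis by (simp add: Lfun_def C_def)
  qed
  have "(\<lambda>y. (1/2) * (norm y)\<^sup>2 - norm y * C + 1/2) differentiable (at x)"
    using x by (intro differentiable_add differentiable_diff differentiable_mult differentiable_power) (auto simp: differentiable_norm_at)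
  then obtain D where "((\<lambda>y. (1/2) * (norm y)\<^sup>2 - norm y * C + 1/2) has_derivative D) (at x)"
    by (auto simp: differentiable_def)
  then have "(Lfun d e has_derivative D) (at x)"
    by (rule has_derivative_transform_within_open[OF _ \<open>open S\<close> xS]) (simp add: eq)
  then show ?thesis by (rule differentiableI)
qed

definition badset :: "'a::euclidean_space \<Rightarrow> 'a set" where
  "badset e = (if DIM('a) = 1 then {0} else span {e})"

lemma good_diff:
  fixes x e :: "'a::euclidean_space"
  assumes e: "e \<in> Basis" and x: "x \<notin> badset e"
  shows "x \<noteq> 0 \<and> Lfun d e differentiable (at x)"
proof (cases "DIM('a) = 1")
  case True
  then have "x \<noteq> 0" using x by (simp add: badset_def)
  then show ?thesis using Lfun_diff_dim1[OF e _ True] by blast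
next
  case False
  then have xs: "x \<notin> span {e}" using x by (simp add: badset_def)
  have x0: "x \<noteq> 0" using xs span_zero by metis
  have "\<bar>x \<bullet> e\<bar> \<le> norm x * norm e" by (rule Cauchy_Schwarz_ineq2)
  moreover have "\<bar>x \<bullet> e\<bar> \<noteq> norm x * norm e"
  proof
    assume "\<bar>x \<bullet> e\<bar> = norm x * norm e"
    then have "norm x *\<^sub>R e = norm e *\<^sub>R x \<or> norm x *\<^sub>R e = - (norm e *\<^sub>R x)"
      using norm_cauchy_schwarz_abs_eq[of x e] by simp
    then have "norm x *\<^sub>R e = x \<or> norm x *\<^sub>R e = - x" using e by simp
    then have "x = norm x *\<^sub>R e \<or> x = (- norm x) *\<^sub>R e" by (metis minus_minus scaleR_minus_left)
    moreover have "e \<in> span {e}" by (rule span_base) simp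
    ultimately have "x \<in> span {e}" using span_scale[of e "{e}"] by metis
    then show False using xs by simp
  qed
  ultimately have "\<bar>x \<bullet> e\<bar> < norm x" using e by simp
  then show ?thesis using Lfun_diff_offaxis[OF e x0] x0 by auto
qed

lemma badset_null:
  fixes e :: "'a::euclidean_space"
  assumes e: "e \<in> Basis"
  shows "badset e \<in> null_sets lborel"
proof (cases "DIM('a) = 1")
  case True then show ?thesis by (simp add: badset_def finite_imp_null_set_lborel)
next
  case False
  have "e \<noteq> 0" using e by auto
  then have "dim (span {e}) = 1" by (simp add: dim_span)
  then have "dim (span {e}) < DIM('a)" using False DIM_positive[where 'a='a] by linarith
  then have "negligible (span {e})" by (rule negligible_lowdim)
  then have "span {e} \<in> null_sets lebesgue" by (simp add: negligible_iff_null_sets)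
  moreover have "span {e} \<in> sets lborel" by (simp add: closed_subspace borel_closed)
  ultimately have "span {e} \<in> null_sets lborel" by (simp add: null_sets_completion_iff)
  then show ?thesis using False by (simp add: badset_def)
qed

lemma step_ineq:
  fixes x z e :: "'a::euclidean_space" and F :: "'a \<Rightarrow> 'a"
  assumes e: "e \<in> Basis" and good: "x \<notin> badset e"
    and Fclose: "\<And>y v. (Lfun d e has_derivative (\<lambda>h. v \<bullet> h)) (at y) \<Longrightarrow>
                   norm (F y - v) \<le> c * (norm y + 1)"
    and c: "0 \<le> c" and eta: "0 < eta"
  shows "norm (x - eta *\<^sub>R F x + z) \<ge>
     (1 - eta - eta * c) * norm x + eta * (cos ((gfun ^^ d) pi) - c) + z \<bullet> sgn x"
proof -
  have x0: "x \<noteq> 0" and dx: "Lfun d e differentiable (at x)" using good_diff[OF e good] by auto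
  obtain v where v: "(Lfun d e has_derivative (\<lambda>h. v \<bullet> h)) (at x)" using differentiable_grad[OF dx] by blast
  define R where "R = norm x"
  define C where "C = cos ((gfun ^^ d) (theta e x))"
  define A where "A = cos ((gfun ^^ d) pi)"
  define u where "u = sgn x"
  have R0: "R > 0" using x0 by (simp add: R_def)
  have nu: "norm u = 1" using x0 by (simp add: u_def norm_sgn)
  have xu: "x = R *\<^sub>R u" using x0 by (simp add: u_def R_def sgn_div_norm)
  have CA: "A \<le> C" unfolding A_def C_def using theta_range[of e x] by (intro cos_gd_ge) auto
  have vx: "v \<bullet> x = R * (R - C)" using radial_deriv[OF x0 v] by (simp add: R_def C_def)
  have vu: "v \<bullet> u = R - C" using vx R0 xu by (simp add: inner_scaleR_right)
  have Fv: "norm (F x - v) \<le> c * (R + 1)" using Fclose[OF v] by (simp add: R_def)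
  have "(F x - v) \<bullet> u \<le> norm (F x - v) * norm u" by (metis Cauchy_Schwarz_ineq2 abs_ge_self order_trans)
  then have Fu: "F x \<bullet> u \<le> R - C + c * (R + 1)" using Fv nu vu by (simp add: inner_diff_left)
  have "(x - eta *\<^sub>R F x + z) \<bullet> u \<le> norm (x - eta *\<^sub>R F x + z) * norm u"
    by (metis Cauchy_Schwarz_ineq2 abs_ge_self order_trans)
  then have n1: "(x - eta *\<^sub>R F x + z) \<bullet> u \<le> norm (x - eta *\<^sub>R F x + z)" using nu by simp
  have xuu: "x \<bullet> u = R" using xu nu by (simp add: inner_scaleR_left dot_square_norm power2_eq_square)
  have "(x - eta *\<^sub>R F x + z) \<bullet> u = R - eta * (F x \<bullet> u) + z \<bullet> u"
    by (simp add: inner_diff_left inner_add_left xuu)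
  also have "\<dots> \<ge> R - eta * (R - C + c * (R + 1)) + z \<bullet> u"
    using Fu eta by (simp add: mult_left_mono)
  finally have "R - eta * (R - C + c * (R + 1)) + z \<bullet> u \<le> norm (x - eta *\<^sub>R F x + z)"
    using n1 by linarith
  moreover have "(1 - eta - eta * c) * R + eta * (A - c) \<le> R - eta * (R - C + c * (R + 1))"
    using CA eta by (simp add: algebra_simps)
  ultimately show ?thesis by (simp add: R_def[symmetric] A_def[symmetric] u_def[symmetric])
qed

lemma normal_density_nn_1: "s > 0 \<Longrightarrow> (\<integral>\<^sup>+ t. ennreal (normal_density m s t) \<partial>lborel) = 1"
  using prob_space.emeasure_space_1[OF prob_space_normal_density[where \<mu>=m and \<sigma>=s]]
  by (simp add: emeasure_density)

lemma mgf_1d: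
  fixes s m :: real
  assumes s: "s > 0"
  shows "(\<integral>\<^sup>+ t. ennreal (normal_density 0 s t * exp (- m * t)) \<partial>lborel) = ennreal (exp (m\<^sup>2 * s\<^sup>2 / 2))"
proof -
  have pt: "normal_density 0 s t * exp (- m * t) = exp (m\<^sup>2 * s\<^sup>2 / 2) * normal_density (- m * s\<^sup>2) s t" for t
  proof -
    have "- (t - 0)\<^sup>2 / (2 * s\<^sup>2) + - m * t = m\<^sup>2 * s\<^sup>2 / 2 + - (t - - m * s\<^sup>2)\<^sup>2 / (2 * s\<^sup>2)"
      using s by (simp add: field_simps power2_eq_square)
    then have "exp (- (t - 0)\<^sup>2 / (2 * s\<^sup>2)) * exp (- m * t) = exp (m\<^sup>2 * s\<^sup>2 / 2) * exp (- (t - - m * s\<^sup>2)\<^sup>2 / (2 * s\<^sup>2))"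
      by (simp add: exp_add[symmetric])
    then show ?thesis unfolding normal_density_def by (simp add: ac_simps)
  qed
  have "(\<integral>\<^sup>+ t. ennreal (normal_density 0 s t * exp (- m * t)) \<partial>lborel)
      = (\<integral>\<^sup>+ t. ennreal (exp (m\<^sup>2 * s\<^sup>2 / 2)) * ennreal (normal_density (- m * s\<^sup>2) s t) \<partial>lborel)"
    by (intro nn_integral_cong, subst pt, rule ennreal_mult) auto
  also have "\<dots> = ennreal (exp (m\<^sup>2 * s\<^sup>2 / 2)) * (\<integral>\<^sup>+ t. ennreal (normal_density (- m * s\<^sup>2) s t) \<partial>lborel)"
    by (rule nn_integral_cmult) simp
  also have "\<dots> = ennreal (exp (m\<^sup>2 * s\<^sup>2 / 2))" by (simp add: normal_density_nn_1[OF s])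
  finally show ?thesis .
qed

lemma gauss_prod:
  fixes v u :: "'a::euclidean_space"
  assumes s: "s > 0"
  shows "gauss_dens s v * exp (- lam * (v \<bullet> u)) =
    (\<Prod>b\<in>Basis. normal_density 0 s (v \<bullet> b) * exp (- (lam * (u \<bullet> b)) * (v \<bullet> b)))"
proof -
  define X where "X = 2 * pi * s\<^sup>2"
  have X: "X > 0" using s by (simp add: X_def)
  have n2: "(norm v)\<^sup>2 = (\<Sum>b\<in>Basis. (v \<bullet> b)\<^sup>2)"
    by (subst power2_norm_eq_inner, subst euclidean_inner, simp add: power2_eq_square)
  have vu: "v \<bullet> u = (\<Sum>b\<in>Basis. (v \<bullet> b) * (u \<bullet> b))" by (rule euclidean_inner)
  have sq: "1 / sqrt X = X powr (- 1/2)"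
  proof -
    have "sqrt X = X powr (1/2)" using X by (simp add: powr_half_sqrt)
    then show ?thesis using X by (simp add: powr_minus_divide)
  qed
  have pw: "X powr (- real DIM('a) / 2) = (\<Prod>b\<in>(Basis::'a set). 1 / sqrt X)"
  proof -
    have "(\<Prod>b\<in>(Basis::'a set). 1 / sqrt X) = (X powr (-1/2)) ^ DIM('a)" by (simp only: sq prod_constant)
    also have "\<dots> = (X powr (-1/2)) powr (real DIM('a))" using X by (simp add: powr_realpow)
    also have "\<dots> = X powr (- real DIM('a) / 2)" by (simp add: powr_powr)
    finally show ?thesis by simp
  qed
  have e1: "- (norm v)\<^sup>2 / (2 * s\<^sup>2) = (\<Sum>b\<in>Basis. - (v \<bullet> b)\<^sup>2 / (2 * s\<^sup>2))"
    unfolding n2 by (simp add: sum_divide_distrib sum_negf)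
  have e2: "- lam * (v \<bullet> u) = (\<Sum>b\<in>Basis. - (lam * (u \<bullet> b)) * (v \<bullet> b))"
    unfolding vu sum_distrib_left by (intro sum.cong) (auto simp: algebra_simps)
  have "gauss_dens s v * exp (- lam * (v \<bullet> u)) =
     X powr (- real DIM('a) / 2) * exp (- (norm v)\<^sup>2 / (2 * s\<^sup>2)) * exp (- lam * (v \<bullet> u))"
    unfolding gauss_dens_def X_def by simp
  also have "\<dots> = (\<Prod>b\<in>(Basis::'a set). 1 / sqrt X) * (\<Prod>b\<in>Basis. exp (- (v \<bullet> b)\<^sup>2 / (2 * s\<^sup>2)))
       * (\<Prod>b\<in>Basis. exp (- (lam * (u \<bullet> b)) * (v \<bullet> b)))"
    by (simp only: pw e1 e2 exp_sum finite_Basis)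
  also have "\<dots> = (\<Prod>b\<in>Basis. 1 / sqrt X * exp (- (v \<bullet> b)\<^sup>2 / (2 * s\<^sup>2)) * exp (- (lam * (u \<bullet> b)) * (v \<bullet> b)))"
    by (simp only: prod.distrib)
  also have "\<dots> = (\<Prod>b\<in>Basis. normal_density 0 s (v \<bullet> b) * exp (- (lam * (u \<bullet> b)) * (v \<bullet> b)))"
    by (simp add: normal_density_def X_def)
  finally show ?thesis .
qed

lemma gauss_mgf:
  fixes u :: "'a::euclidean_space"
  assumes s: "s > 0" and u: "norm u \<le> 1"
  shows "(\<integral>\<^sup>+ v. ennreal (gauss_dens s v) * ennreal (exp (- lam * (v \<bullet> u))) \<partial>lborel)
          \<le> ennreal (exp (lam\<^sup>2 * s\<^sup>2 / 2))"
proof -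
  have "(\<integral>\<^sup>+ v. ennreal (gauss_dens s v) * ennreal (exp (- lam * (v \<bullet> u))) \<partial>lborel)
     = (\<integral>\<^sup>+ v. (\<Prod>b\<in>Basis. ennreal (normal_density 0 s (v \<bullet> b) * exp (- (lam * (u \<bullet> b)) * (v \<bullet> b)))) \<partial>lborel)"
  proof (intro nn_integral_cong)
    fix v :: 'a
    have "ennreal (gauss_dens s v) * ennreal (exp (- lam * (v \<bullet> u))) = ennreal (gauss_dens s v * exp (- lam * (v \<bullet> u)))"
      by (rule ennreal_mult[symmetric]) (auto simp: gauss_dens_def)
    also have "\<dots> = ennreal (\<Prod>b\<in>Basis. normal_density 0 s (v \<bullet> b) * exp (- (lam * (u \<bullet> b)) * (v \<bullet> b)))"
      by (simp only: gauss_prod[OF s])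
    also have "\<dots> = (\<Prod>b\<in>Basis. ennreal (normal_density 0 s (v \<bullet> b) * exp (- (lam * (u \<bullet> b)) * (v \<bullet> b))))"
      by (rule prod_ennreal[symmetric]) simp
    finally show "ennreal (gauss_dens s v) * ennreal (exp (- lam * (v \<bullet> u))) = (\<Prod>b\<in>Basis. ennreal (normal_density 0 s (v \<bullet> b) * exp (- (lam * (u \<bullet> b)) * (v \<bullet> b))))" .
  qed
  also have "\<dots> = (\<Prod>b\<in>Basis. (\<integral>\<^sup>+ t. ennreal (normal_density 0 s t * exp (- (lam * (u \<bullet> b)) * t)) \<partial>lborel))"
    by (rule nn_integral_lborel_prod) auto
  also have "\<dots> = (\<Prod>b\<in>Basis. ennreal (exp ((lam * (u \<bullet> b))\<^sup>2 * s\<^sup>2 / 2)))"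
    by (intro prod.cong refl mgf_1d[OF s])
  also have "\<dots> = ennreal (exp (\<Sum>b\<in>Basis. (lam * (u \<bullet> b))\<^sup>2 * s\<^sup>2 / 2))"
    by (simp add: prod_ennreal exp_sum)
  also have "(\<Sum>b\<in>Basis. (lam * (u \<bullet> b))\<^sup>2 * s\<^sup>2 / 2) = lam\<^sup>2 * s\<^sup>2 / 2 * (norm u)\<^sup>2"
  proof -
    have "(norm u)\<^sup>2 = (\<Sum>b\<in>Basis. (u \<bullet> b)\<^sup>2)"
      by (subst power2_norm_eq_inner, subst euclidean_inner, simp add: power2_eq_square)
    then show ?thesis by (simp add: sum_distrib_left power_mult_distrib algebra_simps)
  qed
  also have "\<dots> \<le> lam\<^sup>2 * s\<^sup>2 / 2"
  proof -
    have "(norm u)\<^sup>2 \<le> 1" using u by (simp add: power_le_one)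
    then show ?thesis by (simp add: mult_left_le)
  qed
  finally show ?thesis by simp
qed

lemma indep_pair_nn:
  fixes X Z :: "'w \<Rightarrow> 'a::topological_space"
  assumes P: "prob_space M" and I: "prob_space.indep_var M borel X borel Z"
    and H: "H \<in> borel_measurable (borel \<Otimes>\<^sub>M borel)"
  shows "(\<integral>\<^sup>+ w. H (X w, Z w) \<partial>M) = (\<integral>\<^sup>+ w. (\<integral>\<^sup>+ b. H (X w, b) \<partial>distr M borel Z) \<partial>M)"
proof -
  interpret prob_space M by (rule P)
  have rX: "X \<in> measurable M borel" and rZ: "Z \<in> measurable M borel"
    using indep_var_rv1[OF I] indep_var_rv2[OF I] by auto
  interpret Dz: prob_space "distr M borel Z" by (rule prob_space_distr[OF rZ])
  have eq: "distr M borel X \<Otimes>\<^sub>M distr M borel Z = distr M (borel \<Otimes>\<^sub>M borel) (\<lambda>w. (X w, Z w))"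
    using I by (simp add: indep_var_distribution_eq)
  have Hm: "H \<in> borel_measurable (distr M borel X \<Otimes>\<^sub>M distr M borel Z)"
    using H by (simp cong: measurable_cong_sets[OF sets_pair_measure_cong[OF sets_distr sets_distr] refl])
  have Hm2: "H \<in> borel_measurable (borel \<Otimes>\<^sub>M distr M borel Z)"
    using H by (simp cong: measurable_cong_sets[OF sets_pair_measure_cong[OF refl sets_distr] refl])
  have inner: "(\<lambda>a. \<integral>\<^sup>+ b. H (a, b) \<partial>distr M borel Z) \<in> borel_measurable borel"
    using Dz.borel_measurable_nn_integral_fst[OF Hm2] .
  have "(\<integral>\<^sup>+ w. H (X w, Z w) \<partial>M) = integral\<^sup>N (distr M (borel \<Otimes>\<^sub>M borel) (\<lambda>w. (X w, Z w))) H"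
    using rX rZ H by (subst nn_integral_distr) (auto intro: measurable_Pair)
  also have "\<dots> = integral\<^sup>N (distr M borel X \<Otimes>\<^sub>M distr M borel Z) H" by (simp add: eq)
  also have "\<dots> = (\<integral>\<^sup>+ a. \<integral>\<^sup>+ b. H (a, b) \<partial>distr M borel Z \<partial>distr M borel X)"
    by (rule Dz.nn_integral_fst[OF Hm, symmetric])
  also have "\<dots> = (\<integral>\<^sup>+ w. (\<integral>\<^sup>+ b. H (X w, b) \<partial>distr M borel Z) \<partial>M)"
    using rX inner by (subst nn_integral_distr) auto
  finally show ?thesis .
qed

lemma distr_borel_density:
  assumes D: "distributed M lborel Z g"
  shows "distr M borel Z = density lborel g"
proof -
  have "distr M borel Z = distr M lborel Z" by (rule distr_cong) auto
  then show ?thesis using D by (simp add: distributed_def)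
qed

lemma ae_not_null:
  fixes X :: "'w \<Rightarrow> 'a::euclidean_space" and Z :: "'w \<Rightarrow> 'a"
  assumes P: "prob_space M" and I: "prob_space.indep_var M borel X borel Z"
    and D: "distributed M lborel Z g" and N: "N \<in> null_sets lborel"
    and G: "G \<in> borel_measurable borel"
  shows "AE w in M. G (X w) + Z w \<notin> N"
proof -
  interpret prob_space M by (rule P)
  have rX: "X \<in> measurable M borel" and rZ: "Z \<in> measurable M borel"
    using indep_var_rv1[OF I] indep_var_rv2[OF I] by auto
  have Nb: "N \<in> sets borel" using N by (auto simp: null_sets_def)
  have Hm: "(\<lambda>p. indicator N (G (fst p) + snd p) :: ennreal) \<in> borel_measurable (borel \<Otimes>\<^sub>M borel)"
    using Nb G by measurable
  have inner: "(\<integral>\<^sup>+ b. indicator N (c + b) \<partial>distr M borel Z) = 0" for c :: 'a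
  proof -
    have "(\<integral>\<^sup>+ b. indicator N (c + b) \<partial>distr M borel Z) = (\<integral>\<^sup>+ b. g b * indicator N (c + b) \<partial>lborel)"
      unfolding distr_borel_density[OF D]
      using Nb distributed_borel_measurable[OF D] by (subst nn_integral_density) auto
    also have "\<dots> = 0"
    proof -
      have "{b. b - (- c) \<in> N} \<in> null_sets lborel" by (rule null_sets_translation[OF N])
      then have "AE b in lborel. b \<notin> {b. b - (- c) \<in> N}" by (rule AE_not_in)
      then have ae: "AE b in lborel. g b * indicator N (c + b) = 0"
        by eventually_elim (simp add: add.commute)
      show ?thesis using nn_integral_cong_AE[OF ae] by simp
    qed
    finally show ?thesis by simp
  qed
  have "(\<integral>\<^sup>+ w. indicator N (G (X w) + Z w) \<partial>M) = (\<integral>\<^sup>+ w. (\<integral>\<^sup>+ b. indicator N (G (X w) + b) \<partial>distr M borel Z) \<partial>M)"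
    using indep_pair_nn[OF P I Hm] by simp
  also have "\<dots> = 0" by (simp add: inner)
  finally have z: "(\<integral>\<^sup>+ w. indicator N (G (X w) + Z w) \<partial>M) = 0" .
  have "(\<lambda>w. indicator N (G (X w) + Z w) :: ennreal) \<in> borel_measurable M"
    using Nb G rX rZ by measurable
  then have "AE w in M. (indicator N (G (X w) + Z w) :: ennreal) = 0"
    using z nn_integral_0_iff_AE by blast
  then show ?thesis by eventually_elim (simp add: indicator_eq_0_iff)
qed

lemma gauss_meas: "(\<lambda>v. ennreal (gauss_dens s v)) \<in> borel_measurable borel"
  unfolding gauss_dens_def by measurable

lemma mgf_inner:
  fixes Z :: "'w \<Rightarrow> 'a::euclidean_space"
  assumes D: "distributed M lborel Z (\<lambda>v. ennreal (gauss_dens s v))" and s: "s > 0" and u: "norm u \<le> 1"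
  shows "(\<integral>\<^sup>+ b. ennreal (exp (K - lam * (b \<bullet> u))) \<partial>distr M borel Z) \<le> ennreal (exp K) * ennreal (exp (lam\<^sup>2 * s\<^sup>2 / 2))"
proof -
  have "(\<integral>\<^sup>+ b. ennreal (exp (K - lam * (b \<bullet> u))) \<partial>distr M borel Z)
      = (\<integral>\<^sup>+ b. ennreal (gauss_dens s b) * ennreal (exp (K - lam * (b \<bullet> u))) \<partial>lborel)"
    unfolding distr_borel_density[OF D] using gauss_meas by (subst nn_integral_density) auto
  also have "\<dots> = (\<integral>\<^sup>+ b. ennreal (exp K) * (ennreal (gauss_dens s b) * ennreal (exp (- lam * (b \<bullet> u)))) \<partial>lborel)"
  proof (intro nn_integral_cong)
    fix b :: 'a
    have "exp (K - lam * (b \<bullet> u)) = exp K * exp (- lam * (b \<bullet> u))" by (simp add: exp_add[symmetric])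
    then show "ennreal (gauss_dens s b) * ennreal (exp (K - lam * (b \<bullet> u))) = ennreal (exp K) * (ennreal (gauss_dens s b) * ennreal (exp (- lam * (b \<bullet> u))))"
      by (simp only: ennreal_mult[OF exp_ge_zero exp_ge_zero] mult_ac)
  qed
  also have "\<dots> = ennreal (exp K) * (\<integral>\<^sup>+ b. ennreal (gauss_dens s b) * ennreal (exp (- lam * (b \<bullet> u))) \<partial>lborel)"
    by (rule nn_integral_cmult) (unfold gauss_dens_def, measurable)
  also have "\<dots> \<le> ennreal (exp K) * ennreal (exp (lam\<^sup>2 * s\<^sup>2 / 2))"
    by (intro mult_left_mono gauss_mgf[OF s u]) auto
  finally show ?thesis .
qed

lemma exp3: "exp (3::real) \<ge> 19"
proof -
  have "exp (3::real) = exp (3/100) ^ 100" using exp_of_nat_mult[of 100 "3/100::real"] by simp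
  moreover have "(1 + 3/100::real) ^ 100 \<le> exp (3/100) ^ 100"
    by (intro power_mono exp_ge_add_one_self) auto
  moreover have "(19::real) \<le> (1 + 3/100) ^ 100"
  proof -
    have a: "(1343/1000::real) \<le> (103/100) ^ 10" by (simp add: power_divide)
    have b: "(19::real) \<le> (1343/1000) ^ 10" by (simp add: power_divide)
    have "(1343/1000::real) ^ 10 \<le> ((103/100) ^ 10) ^ 10" by (rule power_mono[OF a]) simp
    also have "\<dots> = (1 + 3/100::real) ^ 100" by (simp flip: power_mult)
    finally show ?thesis using b by linarith
  qed
  ultimately show ?thesis by linarith
qed

lemma one_minus_le_exp:
  fixes h :: real
  assumes "0 \<le> h"
  shows "1 - h \<le> exp (- h - h\<^sup>2 / 2)"
proof -
  define f where "f = (\<lambda>t::real. exp (- t - t\<^sup>2 / 2) - (1 - t))"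
  have "f 0 \<le> f h"
  proof (rule DERIV_nonneg_imp_nondecreasing[OF assms])
    fix t :: real assume t: "0 \<le> t" "t \<le> h"
    have d: "(f has_real_derivative (exp (- t - t\<^sup>2 / 2) * (- 1 - t) + 1)) (at t)"
      unfolding f_def by (auto intro!: derivative_eq_intros simp: power2_eq_square)
    have "1 + t \<le> exp t" by simp
    also have "\<dots> \<le> exp (t + t\<^sup>2 / 2)" by simp
    finally have "(1 + t) * exp (- t - t\<^sup>2 / 2) \<le> exp (t + t\<^sup>2 / 2) * exp (- t - t\<^sup>2 / 2)"
      by (intro mult_right_mono) auto
    also have "\<dots> = 1" by (simp add: exp_add[symmetric])
    finally have "0 \<le> exp (- t - t\<^sup>2 / 2) * (- 1 - t) + 1" by (simp add: algebra_simps)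
    then show "\<exists>y. (f has_real_derivative y) (at t) \<and> 0 \<le> y" using d by blast
  qed
  then show ?thesis by (simp add: f_def)
qed

lemma qpow:
  fixes eta q :: real and j :: nat
  assumes eta: "0 < eta" "eta \<le> 1/2" and q: "0 \<le> q" "q \<le> 1 - eta" and j: "real j \<ge> 3 / eta - 1"
  shows "q ^ j \<le> 1 / 19"
proof -
  have "q ^ j \<le> (1 - eta) ^ j" using q by (intro power_mono) auto
  also have "\<dots> \<le> exp (- eta - eta\<^sup>2 / 2) ^ j"
    using eta one_minus_le_exp[of eta] by (intro power_mono) auto
  also have "\<dots> = exp (real j * (- eta - eta\<^sup>2 / 2))" by (simp add: exp_of_nat_mult)
  also have "\<dots> \<le> exp (- 3)"
  proof -
    have pos: "eta + eta\<^sup>2 / 2 > 0" using eta by (simp add: add_pos_nonneg)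
    have "(3 / eta - 1) * (eta + eta\<^sup>2 / 2) \<le> real j * (eta + eta\<^sup>2 / 2)"
      using j pos by (intro mult_right_mono) auto
    moreover have "(3 / eta - 1) * (eta + eta\<^sup>2 / 2) = 3 + eta / 2 - eta\<^sup>2 / 2"
      using eta by (simp add: field_simps power2_eq_square)
    moreover have "eta\<^sup>2 \<le> eta" using eta by (simp add: power2_eq_square mult_le_cancel_right1)
    ultimately have "3 \<le> real j * (eta + eta\<^sup>2 / 2)" by linarith
    then show ?thesis by (simp add: algebra_simps)
  qed
  also have "\<dots> = 1 / exp 3" by (simp add: exp_minus divide_inverse)
  also have "\<dots> \<le> 1 / 19" using exp3 by (intro divide_left_mono) auto
  finally show ?thesis .
qed

lemma key_numeric:
  fixes A c E :: real
  assumes A: "A \<le> 1" and c: "0 \<le> c" "c \<le> A / 40" and E: "0 \<le> E" "E \<le> 1/19"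
  shows "0.9 * A * (1 + c) \<le> (A - c) * (1 - E)"
proof -
  have A0: "0 \<le> A" using c by linarith
  have "(A - c) * (18/19) \<le> (A - c) * (1 - E)" using E c by (intro mult_left_mono) auto
  moreover have "0.9 * A * (1 + c) \<le> (A - c) * (18/19)"
  proof -
    have "A * c \<le> c" using A c by (simp add: mult_left_le_one_le)
    moreover have e1: "0.9 * A * (1 + c) = 0.9 * A + 0.9 * (A * c)" by (simp add: algebra_simps)
    moreover have e2: "(A - c) * (18/19) = 18/19 * A - 18/19 * c" by (simp add: left_diff_distrib mult.commute)
    ultimately show ?thesis using c A0 unfolding e1 e2 by linarith
  qed
  ultimately show ?thesis by linarith
qed

primrec psi :: "real \<Rightarrow> ('a::euclidean_space \<Rightarrow> 'a) \<Rightarrow> 'a \<Rightarrow> nat \<Rightarrow> (nat \<Rightarrow> 'a) \<Rightarrow> 'a" where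
  "psi eta F x0 0 f = x0"
| "psi eta F x0 (Suc k) f = psi eta F x0 k f - eta *\<^sub>R F (psi eta F x0 k f) + f (Suc k)"

lemma psi_meas:
  assumes F: "F \<in> borel_measurable borel" and kn: "k \<le> n"
  shows "psi eta F x0 k \<in> borel_measurable (Pi\<^sub>M {1..n} (\<lambda>_. borel))"
  using kn
proof (induction k)
  case 0 then show ?case by simp
next
  case (Suc k)
  then have IH: "psi eta F x0 k \<in> borel_measurable (Pi\<^sub>M {1..n} (\<lambda>_. borel))" by simp
  have C: "(\<lambda>f. f (Suc k)) \<in> borel_measurable (Pi\<^sub>M {1..n} (\<lambda>_. (borel :: 'a measure)))"
    using Suc.prems by (intro measurable_component_singleton) auto
  have FC: "(\<lambda>f. F (psi eta F x0 k f)) \<in> borel_measurable (Pi\<^sub>M {1..n} (\<lambda>_. borel))"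
    using measurable_compose[OF IH F] by (simp add: comp_def)
  show ?case using IH C FC by simp
qed

lemma psi_local:
  assumes "\<And>i. i \<in> {1..k} \<Longrightarrow> f i = g i"
  shows "psi eta F x0 k f = psi eta F x0 k g"
  using assms by (induction k) auto

lemma indep_xz:
  fixes z :: "nat \<Rightarrow> 'w \<Rightarrow> 'a::euclidean_space"
  assumes P: "prob_space M" and zind: "prob_space.indep_vars M (\<lambda>_. borel) z {1..}"
    and F: "F \<in> borel_measurable borel"
    and xpsi: "\<And>w. x k w = psi eta F x0 k (\<lambda>i. z i w)"
  shows "prob_space.indep_var M borel (x k) borel (z (Suc k))"
proof -
  interpret prob_space M by (rule P)
  have 1: "indep_var (Pi\<^sub>M {1..k} (\<lambda>_. borel)) (\<lambda>w. restrict (\<lambda>i. z i w) {1..k})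
             (Pi\<^sub>M {Suc k} (\<lambda>_. borel)) (\<lambda>w. restrict (\<lambda>i. z i w) {Suc k})"
    by (rule indep_var_restrict[OF zind]) auto
  have 2: "indep_var borel (psi eta F x0 k \<circ> (\<lambda>w. restrict (\<lambda>i. z i w) {1..k}))
             borel ((\<lambda>f. f (Suc k)) \<circ> (\<lambda>w. restrict (\<lambda>i. z i w) {Suc k}))"
    by (rule indep_var_compose[OF 1 psi_meas[OF F order_refl] measurable_component_singleton]) simp
  have e1: "psi eta F x0 k \<circ> (\<lambda>w. restrict (\<lambda>i. z i w) {1..k}) = x k"
  proof
    fix w
    have "psi eta F x0 k (restrict (\<lambda>i. z i w) {1..k}) = psi eta F x0 k (\<lambda>i. z i w)"
      by (rule psi_local) simp
    then show "(psi eta F x0 k \<circ> (\<lambda>w. restrict (\<lambda>i. z i w) {1..k})) w = x k w" by (simp add: xpsi)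
  qed
  have e2: "(\<lambda>f. f (Suc k)) \<circ> (\<lambda>w. restrict (\<lambda>i. z i w) {Suc k}) = z (Suc k)"
    by (simp add: fun_eq_iff)
  show ?thesis using 2 unfolding e1 e2 .
qed

theorem mainTheorem8:
  fixes d :: nat and eta sigma c :: real and e x0 :: "'a::euclidean_space"
    and F :: "'a \<Rightarrow> 'a" and M :: "'w measure"
    and z :: "nat \<Rightarrow> 'w \<Rightarrow> 'a" and x :: "nat \<Rightarrow> 'w \<Rightarrow> 'a"
  assumes d: "d \<ge> 1"
    and e: "e \<in> Basis"
    and eta: "0 < eta" "eta \<le> 1/2"
    and sigma: "sigma > 0"
    and c: "0 \<le> c" "c \<le> cos ((gfun ^^ d) pi) / 40"
    and Fmeas: "F \<in> borel_measurable borel"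
    and Fclose: "\<And>y v. (Lfun d e has_derivative (\<lambda>h. v \<bullet> h)) (at y) \<Longrightarrow>
                   norm (F y - v) \<le> c * (norm y + 1)"
    and x0: "x0 \<noteq> 0"
    and P: "prob_space M"
    and zind: "prob_space.indep_vars M (\<lambda>_. borel) z {1..}"
    and zdist: "\<And>k. k \<ge> 1 \<Longrightarrow> distributed M lborel (z k) (\<lambda>v. ennreal (gauss_dens sigma v))"
    and xinit: "\<And>w. x 0 w = x0"
    and xstep: "\<And>t w. x (Suc t) w = x t w - eta *\<^sub>R F (x t w) + z (Suc t) w"
  shows "\<forall>t::nat. \<forall>a::real. real t \<ge> 3 / eta \<longrightarrow> a > 0 \<longrightarrow>
           prob_space.prob M {w \<in> space M. norm (x t w) < 0.9 * cos ((gfun ^^ d) pi) - a}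
             \<le> exp (- (2 * eta / sigma\<^sup>2) * a\<^sup>2 / 4)"
proof -
  interpret prob_space M by (rule P)
  define A where "A = cos ((gfun ^^ d) pi)"
  define q where "q = 1 - eta - eta * c"
  define b0 where "b0 = eta * (A - c)"
  have A1: "A \<le> 1" by (simp add: A_def)
  have A0: "0 \<le> A" using c by (simp add: A_def)
  have cA: "c \<le> A / 40" using c by (simp add: A_def)
  have c1: "c \<le> 1/40" using cA A1 by linarith
  have q1: "q \<le> 1 - eta" using eta c by (simp add: q_def)
  have q0: "0 \<le> q"
  proof -
    have "eta * c \<le> (1/2) * (1/40)" using eta c c1 by (intro mult_mono) auto
    then show ?thesis using eta by (simp add: q_def)
  qed
  have qlt: "q < 1"
  proof -
    have "0 \<le> eta * c" using eta c by simp
    then show ?thesis using eta by (simp add: q_def)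
  qed
  have omq: "1 - q = eta * (1 + c)" by (simp add: q_def algebra_simps)
  have xpsi: "x k w = psi eta F x0 k (\<lambda>i. z i w)" for k w
    by (induction k) (simp_all add: xinit xstep)
  have ind: "indep_var borel (x k) borel (z (Suc k))" for k
    using indep_xz[OF P zind Fmeas, of x k] xpsi by blast
  have xm: "x k \<in> borel_measurable M" for k using indep_var_rv1[OF ind[of k]] by simp
  have zD: "distributed M lborel (z (Suc k)) (\<lambda>v. ennreal (gauss_dens sigma v))" for k
    using zdist[of "Suc k"] by simp
  have zm: "z (Suc k) \<in> borel_measurable M" for k using indep_var_rv2[OF ind[of k]] by simp
  have Gm: "(\<lambda>y. y - eta *\<^sub>R F y) \<in> borel_measurable borel" using Fmeas by measurable
  have good: "AE w in M. x (Suc k) w \<notin> badset e" for k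
    using ae_not_null[OF P ind[of k] zD badset_null[OF e] Gm] by (simp add: xstep)
  define Mg where "Mg k lam = (\<integral>\<^sup>+ w. ennreal (exp (- lam * norm (x k w))) \<partial>M)" for k lam
  have step: "Mg (Suc k) lam \<le> ennreal (exp (- lam * b0 + lam\<^sup>2 * sigma\<^sup>2 / 2)) * Mg k (q * lam)"
    if lam: "0 \<le> lam" and gk: "AE w in M. x k w \<notin> badset e" for k lam
  proof -
    define K where "K a = - lam * (q * norm a + b0)" for a :: 'a
    define H where "H p = ennreal (exp (K (fst p) - lam * (snd p \<bullet> sgn (fst p))))" for p :: "'a \<times> 'a"
    have Hm: "H \<in> borel_measurable (borel \<Otimes>\<^sub>M borel)" unfolding H_def K_def by measurable
    have "Mg (Suc k) lam \<le> (\<integral>\<^sup>+ w. H (x k w, z (Suc k) w) \<partial>M)"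
      unfolding Mg_def
    proof (rule nn_integral_mono_AE)
      show "AE w in M. ennreal (exp (- lam * norm (x (Suc k) w))) \<le> H (x k w, z (Suc k) w)"
        using gk
      proof eventually_elim
        case (elim w)
        have "q * norm (x k w) + b0 + z (Suc k) w \<bullet> sgn (x k w) \<le> norm (x (Suc k) w)"
          using step_ineq[OF e elim Fclose c(1) eta(1), where z="z (Suc k) w"]
          by (simp add: xstep q_def b0_def A_def)
        then have "- lam * norm (x (Suc k) w) \<le> - lam * (q * norm (x k w) + b0 + z (Suc k) w \<bullet> sgn (x k w))"
          using lam by (simp add: mult_left_mono)
        then show ?case by (simp add: H_def K_def algebra_simps)
      qed
    qed
    also have "\<dots> = (\<integral>\<^sup>+ w. (\<integral>\<^sup>+ v. H (x k w, v) \<partial>distr M borel (z (Suc k))) \<partial>M)"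
      by (rule indep_pair_nn[OF P ind Hm])
    also have "\<dots> \<le> (\<integral>\<^sup>+ w. ennreal (exp (K (x k w))) * ennreal (exp (lam\<^sup>2 * sigma\<^sup>2 / 2)) \<partial>M)"
    proof (rule nn_integral_mono)
      fix w
      have "norm (sgn (x k w)) \<le> 1" by (simp add: norm_sgn)
      then show "(\<integral>\<^sup>+ v. H (x k w, v) \<partial>distr M borel (z (Suc k))) \<le> ennreal (exp (K (x k w))) * ennreal (exp (lam\<^sup>2 * sigma\<^sup>2 / 2))"
        unfolding H_def using mgf_inner[OF zD sigma] by simp
    qed
    also have "\<dots> = (\<integral>\<^sup>+ w. ennreal (exp (- lam * b0 + lam\<^sup>2 * sigma\<^sup>2 / 2)) * ennreal (exp (- (q * lam) * norm (x k w))) \<partial>M)"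
    proof (intro nn_integral_cong)
      fix w
      have "exp (K (x k w)) * exp (lam\<^sup>2 * sigma\<^sup>2 / 2) = exp (- lam * b0 + lam\<^sup>2 * sigma\<^sup>2 / 2) * exp (- (q * lam) * norm (x k w))"
        by (simp add: K_def exp_add[symmetric] algebra_simps)
      then show "ennreal (exp (K (x k w))) * ennreal (exp (lam\<^sup>2 * sigma\<^sup>2 / 2)) = ennreal (exp (- lam * b0 + lam\<^sup>2 * sigma\<^sup>2 / 2)) * ennreal (exp (- (q * lam) * norm (x k w)))"
        by (simp add: ennreal_mult[symmetric])
    qed
    also have "\<dots> = ennreal (exp (- lam * b0 + lam\<^sup>2 * sigma\<^sup>2 / 2)) * Mg k (q * lam)"
      unfolding Mg_def by (rule nn_integral_cmult) (use xm in measurable)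
    finally show ?thesis .
  qed
  define S where "S j = (1 - q ^ j) / (1 - q)" for j :: nat
  define T where "T j = (1 - (q\<^sup>2) ^ j) / (1 - q\<^sup>2)" for j :: nat
  have qq: "q\<^sup>2 \<le> q" using q0 qlt mult_left_le_one_le[of q q] by (simp add: power2_eq_square)
  have q2: "q\<^sup>2 < 1" using qq qlt by linarith
  have S_Suc: "S (Suc j) = 1 + q * S j" for j
    unfolding S_def using qlt by (simp add: field_simps)
  have T_Suc: "T (Suc j) = 1 + q\<^sup>2 * T j" for j
    unfolding T_def using q2 by (simp add: field_simps)
  have unf: "Mg (Suc j) lam \<le> ennreal (exp (- lam * b0 * S j + lam\<^sup>2 * sigma\<^sup>2 / 2 * T j))"
    if "0 \<le> lam" for j lam
    using that
  proof (induction j arbitrary: lam)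
    case 0
    have "Mg (Suc 0) lam \<le> (\<integral>\<^sup>+ w. 1 \<partial>M)"
      unfolding Mg_def using 0 by (intro nn_integral_mono) auto
    also have "\<dots> = 1" by (simp add: emeasure_space_1)
    finally show ?case by (simp add: S_def T_def)
  next
    case (Suc j)
    have "Mg (Suc (Suc j)) lam \<le> ennreal (exp (- lam * b0 + lam\<^sup>2 * sigma\<^sup>2 / 2)) * Mg (Suc j) (q * lam)"
      by (rule step[OF Suc.prems good])
    also have "\<dots> \<le> ennreal (exp (- lam * b0 + lam\<^sup>2 * sigma\<^sup>2 / 2)) *
        ennreal (exp (- (q * lam) * b0 * S j + (q * lam)\<^sup>2 * sigma\<^sup>2 / 2 * T j))"
      using Suc.IH[of "q * lam"] Suc.prems q0 by (intro mult_left_mono) auto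
    also have "\<dots> = ennreal (exp (- lam * b0 * S (Suc j) + lam\<^sup>2 * sigma\<^sup>2 / 2 * T (Suc j)))"
      by (simp add: ennreal_mult[symmetric] exp_add[symmetric] S_Suc T_Suc algebra_simps power_mult_distrib)
    finally show ?case .
  qed
  show ?thesis
  proof (intro allI impI)
    fix t :: nat and a :: real
    assume t: "real t \<ge> 3 / eta" and a: "a > 0"
    have "3 / eta \<ge> 6" using eta by (simp add: field_simps)
    then have "t \<ge> 1" using t by linarith
    then obtain j where tj: "t = Suc j" by (cases t) auto
    have j: "real j \<ge> 3 / eta - 1" using t tj by simp
    define th where "th = 0.9 * A - a"
    define E where "E = {w \<in> space M. norm (x t w) < th}"
    have Em: "E \<in> sets M" unfolding E_def using xm by measurable
    have goal_eq: "{w \<in> space M. norm (x t w) < 0.9 * cos ((gfun ^^ d) pi) - a} = E"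
      by (simp add: E_def th_def A_def)
    have rhs_pos: "0 \<le> exp (- (2 * eta / sigma\<^sup>2) * a\<^sup>2 / 4)" by simp
    show "prob {w \<in> space M. norm (x t w) < 0.9 * cos ((gfun ^^ d) pi) - a} \<le> exp (- (2 * eta / sigma\<^sup>2) * a\<^sup>2 / 4)"
    proof (cases "th \<le> 0")
      case True
      then have "E = {}" unfolding E_def by (auto simp: not_less intro: order_trans[OF _ norm_ge_zero])
      then show ?thesis unfolding goal_eq by simp
    next
      case False
      define lam where "lam = a * eta / sigma\<^sup>2"
      have lam0: "0 < lam" using a eta sigma by (simp add: lam_def)
      have qj: "q ^ j \<le> 1/19" by (rule qpow[OF eta q0 q1 j])
      have qj0: "0 \<le> q ^ j" using q0 by simp
      have bS: "0.9 * A \<le> b0 * S j"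
      proof -
        have "b0 * S j = (A - c) * (1 - q ^ j) / (1 + c)"
        proof -
          have "b0 * S j = (eta * ((A - c) * (1 - q ^ j))) / (eta * (1 + c))"
            unfolding S_def b0_def omq by simp
          also have "\<dots> = (A - c) * (1 - q ^ j) / (1 + c)"
            using eta(1) by (intro mult_divide_mult_cancel_left) simp
          finally show ?thesis .
        qed
        moreover have "0.9 * A * (1 + c) \<le> (A - c) * (1 - q ^ j)"
          by (rule key_numeric[OF A1 c(1) cA qj0 qj])
        moreover have "1 + c > 0" using c by simp
        ultimately show ?thesis by (simp add: pos_le_divide_eq)
      qed
      have Tb: "T j \<le> 1 / eta"
      proof -
        have "T j \<le> 1 / (1 - q\<^sup>2)" unfolding T_def using q2 q0
          by (intro divide_right_mono) auto
        also have "\<dots> \<le> 1 / (1 - q)"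
          using qq q2 qlt by (intro divide_left_mono) auto
        also have "\<dots> = 1 / (eta * (1 + c))" by (simp add: omq)
        also have "\<dots> \<le> 1 / eta" using eta c by (intro divide_left_mono) (auto simp: mult_le_cancel_left1)
        finally show ?thesis .
      qed
      have "emeasure M E = (\<integral>\<^sup>+ w. indicator E w \<partial>M)" using Em by simp
      also have "\<dots> \<le> (\<integral>\<^sup>+ w. ennreal (exp (lam * th)) * ennreal (exp (- lam * norm (x t w))) \<partial>M)"
      proof (rule nn_integral_mono)
        fix w
        show "indicator E w \<le> ennreal (exp (lam * th)) * ennreal (exp (- lam * norm (x t w)))"
        proof (cases "w \<in> E")
          case True
          then have "norm (x t w) < th" by (simp add: E_def)
          then have "0 \<le> lam * th + - lam * norm (x t w)" using lam0 by (simp add: algebra_simps)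
          moreover have "1 + (lam * th + - lam * norm (x t w)) \<le> exp (lam * th + - lam * norm (x t w))"
            by (rule exp_ge_add_one_self)
          ultimately have "1 \<le> exp (lam * th + - lam * norm (x t w))" by linarith
          then have "1 \<le> exp (lam * th) * exp (- lam * norm (x t w))" by (simp only: exp_add)
          then show ?thesis using True by (simp add: ennreal_mult[symmetric])
        qed simp
      qed
      also have "\<dots> = ennreal (exp (lam * th)) * Mg t lam"
        unfolding Mg_def by (rule nn_integral_cmult) (use xm in measurable)
      also have "\<dots> \<le> ennreal (exp (lam * th)) * ennreal (exp (- lam * b0 * S j + lam\<^sup>2 * sigma\<^sup>2 / 2 * T j))"
        unfolding tj using unf[of lam j] lam0 by (intro mult_left_mono) auto
      also have "\<dots> = ennreal (exp (lam * th - lam * b0 * S j + lam\<^sup>2 * sigma\<^sup>2 / 2 * T j))"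
        by (simp add: ennreal_mult[symmetric] exp_add[symmetric] algebra_simps)
      also have "\<dots> \<le> ennreal (exp (- (2 * eta / sigma\<^sup>2) * a\<^sup>2 / 4))"
      proof -
        have l1: "lam * th - lam * b0 * S j \<le> - lam * a"
        proof -
          have "lam * (0.9 * A) \<le> lam * (b0 * S j)" using bS lam0 by (intro mult_left_mono) auto
          then show ?thesis by (simp add: th_def algebra_simps)
        qed
        have l2: "lam\<^sup>2 * sigma\<^sup>2 / 2 * T j \<le> lam\<^sup>2 * sigma\<^sup>2 / 2 * (1 / eta)"
          using Tb by (intro mult_left_mono) auto
        have l3: "- lam * a + lam\<^sup>2 * sigma\<^sup>2 / 2 * (1 / eta) = - (2 * eta / sigma\<^sup>2) * a\<^sup>2 / 4"
          using eta sigma by (simp add: lam_def field_simps power2_eq_square)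
        have "lam * th - lam * b0 * S j + lam\<^sup>2 * sigma\<^sup>2 / 2 * T j \<le> - (2 * eta / sigma\<^sup>2) * a\<^sup>2 / 4"
          using l1 l2 l3 by linarith
        then show ?thesis by (simp add: ennreal_leI)
      qed
      finally have "emeasure M E \<le> ennreal (exp (- (2 * eta / sigma\<^sup>2) * a\<^sup>2 / 4))" .
      then have "prob E \<le> exp (- (2 * eta / sigma\<^sup>2) * a\<^sup>2 / 4)"
        by (simp add: emeasure_eq_measure ennreal_le_iff)
      then show ?thesis unfolding goal_eq .
    qed
  qed
qed

end
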